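(* Let $G$ be a bipartite permutation graph with a transitive vertex ordering $<$. Let $M=\{e_1,e_2,\ldots,e_t\}$ be a matching in $G$ where $l(e_1)<l(e_2)<\cdots<l(e_t)$. Then $M$ is uniquely restricted if and only if $\{e_i,e_{i+1}\}$ is a uniquely restricted matching in $G$ for each $i\in\{1,2,\ldots,t-1\}$.
   Context: Graphs are finite, simple, undirected. A permutation graph is a graph isomorphic to some $G_\pi$, where for a permutation $\pi$ of $\{1,\dots,n\}$, $G_\pi$ has vertex set $\{1,\dots,n\}$ and edges $ij$ with $(i-j)(\pi(i)-\pi(j))<0$; a bipartite permutation graph is a permutation graph that is bipartite. An ordering $<$ of $V(G)$ is a transitive vertex ordering if for all $u<v<w$: (a) $uv,vw\in E(G)$ implies $uw\in E(G)$, and (b) $uw\in E(G)$ implies $uv\in E(G)$ or $vw\in E(G)$. For an edge $e=uv$, $l(e)=\min_<\{u,v\}$ and $r(e)=\max_<\{u,v\}$. A matching is a set of pairwise vertex-disjoint edges; it is uniquely restricted if no other matching of $G$ matches exactly the same vertex set. *)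

theory Defs
  imports "HOL-Combinatorics.Permutations"
begin

definition simple_graph :: "'a set \<Rightarrow> 'a set set \<Rightarrow> bool" where
  "simple_graph V E \<longleftrightarrow> finite V \<and>
     (\<forall>e\<in>E. \<exists>u v. e = {u, v} \<and> u \<noteq> v \<and> u \<in> V \<and> v \<in> V)"

definition perm_graph_edges :: "nat \<Rightarrow> (nat \<Rightarrow> nat) \<Rightarrow> nat set set" where
  "perm_graph_edges n \<pi> = {{i, j} | i j. i \<in> {1..n} \<and> j \<in> {1..n} \<and>
       (int i - int j) * (int (\<pi> i) - int (\<pi> j)) < 0}"

definition permutation_graph :: "'a set \<Rightarrow> 'a set set \<Rightarrow> bool" where
  "permutation_graph V E \<longleftrightarrow> (\<exists>n \<pi> f. \<pi> permutes {1..n} \<and> bij_betw f V {1..n} \<and>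
       (\<forall>u\<in>V. \<forall>v\<in>V. {u, v} \<in> E \<longleftrightarrow> {f u, f v} \<in> perm_graph_edges n \<pi>))"

definition bipartite :: "'a set \<Rightarrow> 'a set set \<Rightarrow> bool" where
  "bipartite V E \<longleftrightarrow> (\<exists>A B. A \<union> B = V \<and> A \<inter> B = {} \<and>
       (\<forall>e\<in>E. card (e \<inter> A) = 1 \<and> card (e \<inter> B) = 1))"

definition bipartite_permutation_graph :: "'a set \<Rightarrow> 'a set set \<Rightarrow> bool" where
  "bipartite_permutation_graph V E \<longleftrightarrow> simple_graph V E \<and> permutation_graph V E \<and> bipartite V E"

text \<open>A transitive vertex ordering, given as a strict linear order r on V ((u,v) \<in> r means u < v).\<close>
definition transitive_vertex_ordering :: "'a set \<Rightarrow> 'a set set \<Rightarrow> 'a rel \<Rightarrow> bool" where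
  "transitive_vertex_ordering V E r \<longleftrightarrow> strict_linear_order_on V r \<and> r \<subseteq> V \<times> V \<and>
     (\<forall>u\<in>V. \<forall>v\<in>V. \<forall>w\<in>V. (u, v) \<in> r \<and> (v, w) \<in> r \<longrightarrow>
        ({u, v} \<in> E \<and> {v, w} \<in> E \<longrightarrow> {u, w} \<in> E) \<and>
        ({u, w} \<in> E \<longrightarrow> {u, v} \<in> E \<or> {v, w} \<in> E))"

definition lft :: "'a rel \<Rightarrow> 'a set \<Rightarrow> 'a" where
  "lft r e = (THE u. u \<in> e \<and> (\<forall>v\<in>e. v \<noteq> u \<longrightarrow> (u, v) \<in> r))"

definition matching :: "'a set set \<Rightarrow> 'a set set \<Rightarrow> bool" where
  "matching E M \<longleftrightarrow> M \<subseteq> E \<and> (\<forall>e\<in>M. \<forall>f\<in>M. e \<noteq> f \<longrightarrow> e \<inter> f = {})"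

definition uniquely_restricted :: "'a set set \<Rightarrow> 'a set set \<Rightarrow> bool" where
  "uniquely_restricted E M \<longleftrightarrow> matching E M \<and>
     (\<forall>M'. matching E M' \<and> \<Union>M' = \<Union>M \<longrightarrow> M' = M)"

end

theory Submission
  imports Defs
begin

locale tvo_setting =
  fixes V :: "'a set" and E :: "'a set set" and r :: "'a rel" and n :: nat
    and L R :: "nat \<Rightarrow> 'a"
  assumes tr: "\<And>x y z. (x,y)\<in>r \<Longrightarrow> (y,z)\<in>r \<Longrightarrow> (x,z)\<in>r"
    and irr: "\<And>x. (x,x)\<notin>r"
    and tot: "\<And>x y. x\<in>V \<Longrightarrow> y\<in>V \<Longrightarrow> x\<noteq>y \<Longrightarrow> (x,y)\<in>r \<or> (y,x)\<in>r"
    and Ev: "\<And>u v. {u,v}\<in>E \<Longrightarrow> u\<in>V \<and> v\<in>V"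
    and F1: "\<And>u v w. (u,v)\<in>r \<Longrightarrow> (v,w)\<in>r \<Longrightarrow> {u,v}\<in>E \<Longrightarrow> {v,w}\<in>E \<Longrightarrow> False"
    and F2: "\<And>u v w. (u,v)\<in>r \<Longrightarrow> (v,w)\<in>r \<Longrightarrow> {u,w}\<in>E \<Longrightarrow> {u,v}\<in>E \<or> {v,w}\<in>E"
    and LR: "\<And>i. i<n \<Longrightarrow> (L i,R i)\<in>r \<and> {L i,R i}\<in>E"
    and mono: "\<And>i j. i<j \<Longrightarrow> j<n \<Longrightarrow> (L i, L j)\<in>r"
    and dist: "\<And>i j. i<n \<Longrightarrow> j<n \<Longrightarrow> i\<noteq>j \<Longrightarrow> {L i, R i} \<inter> {L j, R j} = {}"
begin

lemma nbrL: assumes "a<n" "{L a,x}\<in>E" "x\<noteq>L a" shows "(L a,x)\<in>r"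
proof (rule ccontr)
  assume "(L a,x)\<notin>r"
  hence "(x,L a)\<in>r" using tot[of x "L a"] Ev[OF assms(2)] assms by auto
  thus False using F1[of x "L a" "R a"] LR[OF assms(1)] assms(2) by (auto simp: insert_commute)
qed

lemma nbrR: assumes "b<n" "{y,R b}\<in>E" "y\<noteq>R b" shows "(y,R b)\<in>r"
proof (rule ccontr)
  assume "(y,R b)\<notin>r"
  hence "(R b,y)\<in>r" using tot[of y "R b"] Ev[OF assms(2)] assms by auto
  thus False using F1[of "L b" "R b" y] LR[OF assms(1)] assms(2) by (auto simp: insert_commute)
qed

lemma LneR: "i<n \<Longrightarrow> j<n \<Longrightarrow> L i \<noteq> R j"
  using dist[of i j] LR[of i] irr by (cases "i=j") auto

lemma RneR: "i<n \<Longrightarrow> j<n \<Longrightarrow> i\<noteq>j \<Longrightarrow> R i \<noteq> R j"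
  using dist[of i j] by auto

lemma core: "j < n \<Longrightarrow> i < j \<Longrightarrow> {L i,R j}\<in>E \<Longrightarrow> {L j,R i}\<in>E \<Longrightarrow>
   \<exists>k. Suc k<n \<and> {L k,R (Suc k)}\<in>E \<and> {L (Suc k),R k}\<in>E"
proof (induction "j-i" arbitrary: i j rule: less_induct)
  case less
  show ?case
  proof (cases "j = Suc i")
    case True thus ?thesis using less.prems by auto
  next
    case False
    define k where "k = Suc i"
    have kj: "k<j" "i<k" "k<n" using False less.prems k_def by auto
    have ik: "(L i, L k)\<in>r" using mono kj by auto
    have kjL: "(L k, L j)\<in>r" using mono kj less.prems by auto
    have jRi: "(L j, R i)\<in>r" using nbrR[of i "L j"] less.prems LneR by auto
    have LRk: "(L k,R k)\<in>r" "{L k,R k}\<in>E" using LR kj by auto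
    have LRj: "(L j,R j)\<in>r" "{L j,R j}\<in>E" using LR less.prems by auto
    have LRi: "(L i,R i)\<in>r" "{L i,R i}\<in>E" using LR less.prems by auto
    have kRi: "{L k, R i}\<in>E"
      using F2[OF ik tr[OF kjL jRi] LRi(2)] F1[OF ik LRk(1) _ LRk(2)] by blast
    have RV: "R k \<in> V" "R j \<in> V" using Ev LRk LRj by auto
    have "R k \<noteq> R j" using RneR kj less.prems by auto
    then consider "(R k, R j)\<in>r" | "(R j, R k)\<in>r" using tot RV by blast
    then show ?thesis
    proof cases
      case 1
      have "{L i, R k}\<in>E"
        using F2[OF tr[OF ik LRk(1)] 1 less.prems(3)] F1[OF LRk(1) 1 LRk(2)] by blast
      thus ?thesis using less.hyps[of k i] kj kRi by auto
    next
      case 2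
      have a: "{L k, R j}\<in>E"
        using F2[OF tr[OF kjL LRj(1)] 2 LRk(2)] F1[OF LRj(1) 2 LRj(2)] by blast
      have b: "{L j, R k}\<in>E"
        using F2[OF kjL tr[OF LRj(1) 2] LRk(2)] F1[OF kjL LRj(1) _ LRj(2)] by blast
      show ?thesis using less.hyps[of j k] kj less.prems a b by auto
    qed
  qed
qed

lemma cyc: assumes "j<n" "p<n" "i<j" "i<p" "{L i,R j}\<in>E" "{L p,R i}\<in>E"
  shows "\<exists>k. Suc k<n \<and> {L k,R (Suc k)}\<in>E \<and> {L (Suc k),R k}\<in>E"
proof -
  have LRi: "(L i,R i)\<in>r" "{L i,R i}\<in>E" using LR assms by auto
  have LRj: "(L j,R j)\<in>r" "{L j,R j}\<in>E" using LR assms by auto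
  have LRp: "(L p,R p)\<in>r" "{L p,R p}\<in>E" using LR assms by auto
  have pRi: "(L p, R i)\<in>r" using nbrR[of i "L p"] assms LneR by auto
  consider "j=p" | "j<p" | "p<j" by arith
  then show ?thesis
  proof cases
    case 1 thus ?thesis using core assms by auto
  next
    case 2
    have ij: "(L i, L j)\<in>r" using mono assms by auto
    have jp: "(L j, L p)\<in>r" using mono assms 2 by auto
    hence "{L j, R i}\<in>E"
      using F2[OF ij tr[OF jp pRi] LRi(2)] F1[OF ij LRj(1) _ LRj(2)] by blast
    thus ?thesis using core assms by auto
  next
    case 3
    have ip: "(L i, L p)\<in>r" using mono assms by auto
    have pj: "(L p, L j)\<in>r" using mono assms 3 by auto
    have RV: "R p \<in> V" "R j \<in> V" using Ev LRp LRj by auto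
    have "R p \<noteq> R j" using RneR assms 3 by auto
    then consider "(R p, R j)\<in>r" | "(R j, R p)\<in>r" using tot RV by blast
    then show ?thesis
    proof cases
      case 1
      have "{L i, R p}\<in>E"
        using F2[OF tr[OF ip LRp(1)] 1 assms(5)] F1[OF LRp(1) 1 LRp(2)] by blast
      thus ?thesis using core[of p i] assms by auto
    next
      case 2
      have a: "{L p, R j}\<in>E"
        using F2[OF tr[OF pj LRj(1)] 2 LRp(2)] F1[OF LRj(1) 2 LRj(2)] by blast
      have b: "{L j, R p}\<in>E"
        using F2[OF pj tr[OF LRj(1) 2] LRp(2)] F1[OF pj LRj(1) _ LRj(2)] by blast
      show ?thesis using core[of j p] assms 3 a b by auto
    qed
  qed
qed

end


lemma sub_UR:
  assumes ur: "uniquely_restricted E M" and PM: "P \<subseteq> M" and ne: "\<forall>e\<in>E. e \<noteq> {}"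
  shows "uniquely_restricted E P"
proof -
  have mM: "matching E M" using ur unfolding uniquely_restricted_def by (rule conjunct1)
  have ME: "M \<subseteq> E" and Md: "\<And>e f. e\<in>M \<Longrightarrow> f\<in>M \<Longrightarrow> e\<noteq>f \<Longrightarrow> e\<inter>f = {}"
    using mM unfolding matching_def by auto
  have mP: "matching E P" unfolding matching_def
  proof (intro conjI ballI impI)
    show "P \<subseteq> E" using PM ME by (rule subset_trans)
  next
    fix e f assume "e\<in>P" "f\<in>P" "e\<noteq>f"
    thus "e\<inter>f = {}" using Md PM by blast
  qed
  have "M' = P" if m': "matching E M'" and U: "\<Union>M' = \<Union>P" for M'
  proof -
    have M'E: "M' \<subseteq> E" and M'd: "\<And>e f. e\<in>M' \<Longrightarrow> f\<in>M' \<Longrightarrow> e\<noteq>f \<Longrightarrow> e\<inter>f = {}"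
      using m' unfolding matching_def by auto
    define N where "N = M' \<union> (M - P)"
    have disj: "e \<inter> f = {}" if "e \<in> M'" "f \<in> M - P" for e f
    proof (rule ccontr)
      assume "e \<inter> f \<noteq> {}"
      then obtain x where x: "x \<in> e" "x \<in> f" by blast
      have "x \<in> \<Union>M'" using x(1) that(1) by blast
      then obtain g where g: "g \<in> P" "x \<in> g" using U by blast
      have "g \<noteq> f" using that(2) g(1) by blast
      hence "g \<inter> f = {}" using Md g(1) PM that(2) by blast
      thus False using g x by blast
    qed
    have mN: "matching E N" unfolding matching_def
    proof (intro conjI ballI impI)
      show "N \<subseteq> E" using M'E ME unfolding N_def by blast
    next
      fix e f assume ef: "e\<in>N" "f\<in>N" "e\<noteq>f"
      show "e\<inter>f = {}"
      proof (cases "e \<in> M'")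
        case True
        show ?thesis
        proof (cases "f \<in> M'")
          case True thus ?thesis using M'd \<open>e\<in>M'\<close> ef(3) by blast
        next
          case False hence "f \<in> M - P" using ef(2) unfolding N_def by blast
          thus ?thesis using disj \<open>e\<in>M'\<close> by blast
        qed
      next
        case False
        hence e: "e \<in> M - P" using ef(1) unfolding N_def by blast
        show ?thesis
        proof (cases "f \<in> M'")
          case True thus ?thesis using disj[OF True e] by blast
        next
          case False hence "f \<in> M - P" using ef(2) unfolding N_def by blast
          thus ?thesis using Md e ef(3) by blast
        qed
      qed
    qed
    have "\<Union>N = \<Union>M" using U PM unfolding N_def by blast
    hence NM: "N = M" using ur mN unfolding uniquely_restricted_def by blast
    have "M' \<subseteq> P"
    proof
      fix e assume e: "e \<in> M'"
      show "e \<in> P"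
      proof (rule ccontr)
        assume nP: "e \<notin> P"
        have "e \<noteq> {}" using ne e M'E by blast
        then obtain x where x: "x \<in> e" by blast
        have "x \<in> \<Union>M'" using x e by blast
        then obtain g where g: "g \<in> P" "x \<in> g" using U by blast
        have "e \<in> M" using NM e unfolding N_def by blast
        have "g \<noteq> e" using g(1) nP by blast
        hence "g \<inter> e = {}" using Md g(1) PM \<open>e \<in> M\<close> by blast
        thus False using g x by blast
      qed
    qed
    moreover have "P \<subseteq> M'" using NM PM unfolding N_def by blast
    ultimately show ?thesis by blast
  qed
  thus ?thesis using mP unfolding uniquely_restricted_def by blast
qed

lemma bip_tri:
  assumes "bipartite V E" "{x,y}\<in>E" "{y,z}\<in>E" "{x,z}\<in>E" "x\<in>V" "y\<in>V" "z\<in>V"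
    "x\<noteq>y" "y\<noteq>z" "x\<noteq>z"
  shows False
proof -
  obtain A B where AB: "A \<union> B = V" "A \<inter> B = {}" "\<forall>e\<in>E. card (e \<inter> A) = 1 \<and> card (e \<inter> B) = 1"
    using assms(1) unfolding bipartite_def by blast
  have c: "card ({x,y} \<inter> A) = 1" "card ({y,z} \<inter> A) = 1" "card ({x,z} \<inter> A) = 1"
    using AB(3)[rule_format, OF assms(2)] AB(3)[rule_format, OF assms(3)] AB(3)[rule_format, OF assms(4)]
    by (simp_all only: conj_commute)
  have h1: "card ({a,b} \<inter> A) \<noteq> 1" if "a \<in> A" "b \<in> A" "a \<noteq> b" for a b
  proof -
    have "{a,b} \<inter> A = {a,b}" using that by auto
    thus ?thesis using that by simp
  qed
  have h2: "card ({a,b} \<inter> A) \<noteq> 1" if "a \<notin> A" "b \<notin> A" for a b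
  proof -
    have "{a,b} \<inter> A = {}" using that by auto
    thus ?thesis by simp
  qed
  have "(x \<in> A \<longleftrightarrow> y \<in> A) \<or> (y \<in> A \<longleftrightarrow> z \<in> A) \<or> (x \<in> A \<longleftrightarrow> z \<in> A)" by blast
  moreover have "\<not> (x \<in> A \<longleftrightarrow> y \<in> A)" using h1[of x y] h2[of x y] c(1) assms(8) by blast
  moreover have "\<not> (y \<in> A \<longleftrightarrow> z \<in> A)" using h1[of y z] h2[of y z] c(2) assms(9) by blast
  moreover have "\<not> (x \<in> A \<longleftrightarrow> z \<in> A)" using h1[of x z] h2[of x z] c(3) assms(10) by blast
  ultimately show False by blast
qed

lemma lft_eq:
  assumes "trans r" "irrefl r" "(u,v)\<in>r"
  shows "lft r {u,v} = u"
  unfolding lft_def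
proof (rule the_equality)
  show "u \<in> {u, v} \<and> (\<forall>w\<in>{u, v}. w \<noteq> u \<longrightarrow> (u, w) \<in> r)" using assms by auto
next
  fix w assume w: "w \<in> {u, v} \<and> (\<forall>x\<in>{u, v}. x \<noteq> w \<longrightarrow> (w, x) \<in> r)"
  show "w = u"
  proof (rule ccontr)
    assume "w \<noteq> u"
    hence "w = v" "(v,u)\<in>r" using w by auto
    thus False using assms unfolding trans_def irrefl_def by blast
  qed
qed

theorem theorem6:
  fixes V :: "'a set" and E :: "'a set set" and r :: "'a rel" and es :: "'a set list"
  assumes "bipartite_permutation_graph V E"
    and "transitive_vertex_ordering V E r"
    and "matching E (set es)"
    and "sorted_wrt (\<lambda>e f. (lft r e, lft r f) \<in> r) es"
  shows "uniquely_restricted E (set es) \<longleftrightarrow>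
    (\<forall>i. i + 1 < length es \<longrightarrow> uniquely_restricted E {es ! i, es ! (i + 1)})"
proof -
  have sg: "simple_graph V E" and bip: "bipartite V E"
    using assms(1) unfolding bipartite_permutation_graph_def by auto
  have trr: "trans r" and irrr: "irrefl r" and tot: "total_on V r" and rV: "r \<subseteq> V \<times> V"
    and cond: "\<forall>u\<in>V. \<forall>v\<in>V. \<forall>w\<in>V. (u, v) \<in> r \<and> (v, w) \<in> r \<longrightarrow>
        ({u, v} \<in> E \<and> {v, w} \<in> E \<longrightarrow> {u, w} \<in> E) \<and>
        ({u, w} \<in> E \<longrightarrow> {u, v} \<in> E \<or> {v, w} \<in> E)"
  proof -
    note T = assms(2)[unfolded transitive_vertex_ordering_def]
    note S = T[THEN conjunct1, unfolded strict_linear_order_on_def]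
    show "trans r" by (rule S[THEN conjunct1])
    show "irrefl r" by (rule S[THEN conjunct2, THEN conjunct1])
    show "total_on V r" by (rule S[THEN conjunct2, THEN conjunct2])
    show "r \<subseteq> V \<times> V" by (rule T[THEN conjunct2, THEN conjunct1])
    show "\<forall>u\<in>V. \<forall>v\<in>V. \<forall>w\<in>V. (u, v) \<in> r \<and> (v, w) \<in> r \<longrightarrow>
        ({u, v} \<in> E \<and> {v, w} \<in> E \<longrightarrow> {u, w} \<in> E) \<and>
        ({u, w} \<in> E \<longrightarrow> {u, v} \<in> E \<or> {v, w} \<in> E)" by (rule T[THEN conjunct2, THEN conjunct2])
  qed
  have tr: "\<And>x y z. (x,y)\<in>r \<Longrightarrow> (y,z)\<in>r \<Longrightarrow> (x,z)\<in>r" using trr unfolding trans_def by blast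
  have irr: "\<And>x. (x,x)\<notin>r" using irrr unfolding irrefl_def by blast
  have totV: "\<And>x y. x\<in>V \<Longrightarrow> y\<in>V \<Longrightarrow> x\<noteq>y \<Longrightarrow> (x,y)\<in>r \<or> (y,x)\<in>r"
    using tot unfolding total_on_def by blast
  have edge: "\<And>e. e \<in> E \<Longrightarrow> \<exists>u v. e = {u,v} \<and> u\<noteq>v \<and> u\<in>V \<and> v\<in>V"
    using sg unfolding simple_graph_def by blast
  have Ev: "\<And>u v. {u,v}\<in>E \<Longrightarrow> u\<in>V \<and> v\<in>V"
  proof -
    fix u v assume "{u,v}\<in>E"
    then obtain a b where "{u,v} = {a,b}" "a\<in>V" "b\<in>V" using edge by blast
    thus "u\<in>V \<and> v\<in>V" by (metis doubleton_eq_iff)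
  qed
  have ne: "\<forall>e\<in>E. e \<noteq> {}" using edge by blast
  define n where "n = length es"
  have esE: "\<And>i. i<n \<Longrightarrow> es!i \<in> E" using assms(3) unfolding matching_def n_def by auto
  have "\<forall>i. \<exists>p. i<n \<longrightarrow> es!i = {fst p, snd p} \<and> (fst p, snd p)\<in>r"
  proof
    fix i
    show "\<exists>p. i<n \<longrightarrow> es!i = {fst p, snd p} \<and> (fst p, snd p)\<in>r"
    proof (cases "i<n")
      case True
      then obtain u v where uv: "es!i = {u,v}" "u\<noteq>v" "u\<in>V" "v\<in>V" using edge esE by blast
      then consider "(u,v)\<in>r" | "(v,u)\<in>r" using totV by blast
      thus ?thesis
      proof cases
        case 1 thus ?thesis using uv by (intro exI[of _ "(u,v)"]) auto
      next
        case 2 thus ?thesis using uv by (intro exI[of _ "(v,u)"]) auto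
      qed
    qed auto
  qed
  then obtain P where P: "\<And>i. i<n \<Longrightarrow> es!i = {fst (P i), snd (P i)} \<and> (fst (P i), snd (P i))\<in>r"
    by metis
  define L where "L i = fst (P i)" for i
  define R where "R i = snd (P i)" for i
  have esLR: "\<And>i. i<n \<Longrightarrow> es!i = {L i, R i}" and LRr: "\<And>i. i<n \<Longrightarrow> (L i, R i)\<in>r"
    using P unfolding L_def R_def by auto
  have lftL: "\<And>i. i<n \<Longrightarrow> lft r (es!i) = L i" using esLR LRr lft_eq[OF trr irrr] by auto
  have mono: "\<And>i j. i<j \<Longrightarrow> j<n \<Longrightarrow> (L i, L j)\<in>r"
    using assms(4) lftL unfolding sorted_wrt_iff_nth_less n_def by fastforce
  have dist: "\<And>i j. i<n \<Longrightarrow> j<n \<Longrightarrow> i\<noteq>j \<Longrightarrow> {L i, R i} \<inter> {L j, R j} = {}"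
  proof -
    fix i j assume ij: "i<n" "j<n" "i\<noteq>j"
    have "L i \<noteq> L j" using mono[of i j] mono[of j i] ij irr by (cases "i<j") auto
    hence "es!i \<noteq> es!j" using lftL ij by metis
    moreover have "es!i \<in> set es" "es!j \<in> set es" using ij n_def by auto
    ultimately have "es!i \<inter> es!j = {}" using assms(3) unfolding matching_def by blast
    thus "{L i, R i} \<inter> {L j, R j} = {}" using esLR ij by auto
  qed
  have F1: "\<And>u v w. (u,v)\<in>r \<Longrightarrow> (v,w)\<in>r \<Longrightarrow> {u,v}\<in>E \<Longrightarrow> {v,w}\<in>E \<Longrightarrow> False"
  proof -
    fix u v w assume a: "(u,v)\<in>r" "(v,w)\<in>r" "{u,v}\<in>E" "{v,w}\<in>E"
    have V: "u\<in>V" "v\<in>V" "w\<in>V" using a rV by auto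
    have "{u,w}\<in>E" using cond V a by blast
    moreover have "u\<noteq>v" "v\<noteq>w" "u\<noteq>w" using a irr tr by blast+
    ultimately show False using bip_tri[OF bip a(3) a(4)] V by blast
  qed
  have F2: "\<And>u v w. (u,v)\<in>r \<Longrightarrow> (v,w)\<in>r \<Longrightarrow> {u,w}\<in>E \<Longrightarrow> {u,v}\<in>E \<or> {v,w}\<in>E"
  proof -
    fix u v w assume a: "(u,v)\<in>r" "(v,w)\<in>r" "{u,w}\<in>E"
    have V: "u\<in>V" "v\<in>V" "w\<in>V" using a rV by auto
    show "{u,v}\<in>E \<or> {v,w}\<in>E" using cond V a by blast
  qed
  have LR: "\<And>i. i<n \<Longrightarrow> (L i,R i)\<in>r \<and> {L i,R i}\<in>E" using LRr esLR esE by metis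
  interpret S: tvo_setting V E r n L R
    using tvo_setting.intro[OF tr irr totV Ev F1 F2 LR mono dist] .
  have memM: "\<And>e. e \<in> set es \<longleftrightarrow> (\<exists>i<n. e = {L i, R i})"
    using esLR unfolding n_def by (auto simp: in_set_conv_nth)
  have UM: "\<And>x. x \<in> \<Union>(set es) \<longleftrightarrow> (\<exists>i<n. x = L i \<or> x = R i)"
    using memM by blast
  show ?thesis
  proof
    assume ur: "uniquely_restricted E (set es)"
    show "\<forall>i. i + 1 < length es \<longrightarrow> uniquely_restricted E {es ! i, es ! (i + 1)}"
    proof (intro allI impI)
      fix i assume "i + 1 < length es"
      hence "{es ! i, es ! (i + 1)} \<subseteq> set es" by auto
      thus "uniquely_restricted E {es ! i, es ! (i + 1)}" using sub_UR[OF ur _ ne] by blast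
    qed
  next
    assume H: "\<forall>i. i + 1 < length es \<longrightarrow> uniquely_restricted E {es ! i, es ! (i + 1)}"
    have "M' = set es" if m': "matching E M'" and U: "\<Union>M' = \<Union>(set es)" for M'
    proof -
      have sub: "set es \<subseteq> M'"
      proof (rule ccontr)
        assume "\<not> set es \<subseteq> M'"
        then obtain i where i: "i<n \<and> es!i \<notin> M'" using memM esLR by fastforce
        define k where "k = (LEAST i. i<n \<and> es!i \<notin> M')"
        have k: "k<n" "es!k \<notin> M'" using LeastI[of "\<lambda>i. i<n \<and> es!i \<notin> M'", OF i]
          unfolding k_def by auto
        have kmin: "es!i \<in> M'" if ik: "i<k" for i
        proof -
          have "\<not> (i<n \<and> es!i \<notin> M')" using not_less_Least[of i "\<lambda>i. i<n \<and> es!i \<notin> M'"] ik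
            unfolding k_def by blast
          moreover have "i<n" using ik k(1) by simp
          ultimately show ?thesis by blast
        qed
        have M'E: "M' \<subseteq> E" using m' unfolding matching_def by blast
        have M'd: "\<And>e f. e\<in>M' \<Longrightarrow> f\<in>M' \<Longrightarrow> e\<noteq>f \<Longrightarrow> e\<inter>f = {}" using m' unfolding matching_def by blast
        obtain j where j: "j<n" "k<j" "{L k, R j} \<in> E"
        proof -
          have "L k \<in> \<Union>M'" using U UM k by blast
          then obtain f where f: "f\<in>M'" "L k \<in> f" by blast
          then obtain u v where uv: "f = {u,v}" "u\<noteq>v" using edge M'E by blast
          then obtain x where x: "f = {L k, x}" "x \<noteq> L k" using f by auto
          have "x \<in> \<Union>(set es)" using U f x by blast
          then obtain j where j: "j<n" "x = L j \<or> x = R j" using UM by blast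
          have fE: "{L k, x}\<in>E" using f x M'E by blast
          have "x \<noteq> L j"
          proof
            assume xL: "x = L j"
            have "(L k, L j)\<in>r" using S.nbrL[OF k(1)] fE x xL by auto
            moreover have "(L j, L k)\<in>r" using S.nbrL[OF j(1), of "L k"] fE x xL by (auto simp: insert_commute)
            ultimately show False using tr irr by blast
          qed
          hence xR: "x = R j" using j by blast
          have "j \<noteq> k" using k esLR x xR f by auto
          moreover have "\<not> j < k"
          proof
            assume "j<k"
            hence ej: "es!j \<in> M'" using kmin by blast
            have "L k \<notin> es!j" using S.dist[of k j] esLR k j \<open>j \<noteq> k\<close> by auto
            hence "es!j \<noteq> f" using f by blast
            moreover have "R j \<in> es!j \<inter> f" using esLR j x xR by auto
            ultimately show False using M'd[OF ej f(1)] by blast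
          qed
          ultimately show ?thesis using that j fE xR by auto
        qed
        obtain p where p: "p<n" "k<p" "{L p, R k} \<in> E"
        proof -
          have "R k \<in> \<Union>M'" using U UM k by blast
          then obtain f where f: "f\<in>M'" "R k \<in> f" by blast
          then obtain u v where uv: "f = {u,v}" "u\<noteq>v" using edge M'E by blast
          then obtain x where x: "f = {x, R k}" "x \<noteq> R k" using f by auto
          have "x \<in> \<Union>(set es)" using U f x by blast
          then obtain p where p: "p<n" "x = L p \<or> x = R p" using UM by blast
          have fE: "{x, R k}\<in>E" using f x M'E by blast
          have "x \<noteq> R p"
          proof
            assume xR: "x = R p"
            have "(R p, R k)\<in>r" using S.nbrR[OF k(1)] fE x xR by auto
            moreover have "(R k, R p)\<in>r" using S.nbrR[OF p(1), of "R k"] fE x xR by (auto simp: insert_commute)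
            ultimately show False using tr irr by blast
          qed
          hence xL: "x = L p" using p by blast
          have "p \<noteq> k" using k esLR x xL f by (auto simp: insert_commute)
          moreover have "\<not> p < k"
          proof
            assume "p<k"
            hence ep: "es!p \<in> M'" using kmin by blast
            have "R k \<notin> es!p" using S.dist[of k p] esLR k p \<open>p \<noteq> k\<close> by auto
            hence "es!p \<noteq> f" using f by blast
            moreover have "L p \<in> es!p \<inter> f" using esLR p x xL by auto
            ultimately show False using M'd[OF ep f(1)] by blast
          qed
          ultimately show ?thesis using that p fE xL by auto
        qed
        obtain c where c: "Suc c<n" "{L c,R (Suc c)}\<in>E" "{L (Suc c),R c}\<in>E"
          using S.cyc[OF j(1) p(1) j(2) p(2) j(3) p(3)] by blast
        have d1: "{L c, R c} \<inter> {L (Suc c), R (Suc c)} = {}" using S.dist[of c "Suc c"] c by auto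
        have d2: "L c \<noteq> R c" "L (Suc c) \<noteq> R (Suc c)" using LR c irr by (metis Suc_lessD)+
        define N where "N = {{L c,R (Suc c)},{L (Suc c),R c}}"
        have mN: "matching E N" using c d1 d2 unfolding matching_def N_def by auto
        have UN: "\<Union>N = \<Union>{es ! c, es ! (c + 1)}" using esLR c unfolding N_def by auto
        have "N \<noteq> {es ! c, es ! (c + 1)}"
        proof
          assume "N = {es ! c, es ! (c + 1)}"
          hence "{L c,R (Suc c)} \<in> {{L c, R c}, {L (Suc c), R (Suc c)}}"
            using esLR c unfolding N_def by (metis Suc_eq_plus1 Suc_lessD insertI1)
          thus False using d1 d2 by (auto simp: doubleton_eq_iff)
        qed
        moreover have "uniquely_restricted E {es ! c, es ! (c + 1)}" using H c n_def by auto
        ultimately show False using mN UN unfolding uniquely_restricted_def by blast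
      qed
      have "M' \<subseteq> set es"
      proof
        fix f assume f: "f \<in> M'"
        have "f \<noteq> {}" using f m' ne unfolding matching_def by blast
        then obtain x where x: "x \<in> f" by blast
        then obtain e where e: "e \<in> set es" "x \<in> e" using U f by blast
        hence "e \<in> M'" using sub by blast
        hence "e = f" using m' f e x unfolding matching_def by blast
        thus "f \<in> set es" using e by blast
      qed
      thus ?thesis using sub by blast
    qed
    thus "uniquely_restricted E (set es)" using assms(3) unfolding uniquely_restricted_def by blast
  qed
qed

end
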